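(* Let $X$ be a standard Gaussian variable, $Y_1,Y_2,\dots$ i.i.d. standard exponential variables, and $N$ a Poisson random variable with mean $\ell\ge0$, all independent. Then $$\sqrt{\textstyle\sum_{i=1}^N Y_i}\ \preceq\ \frac1{\sqrt2}\max\{X+\sqrt{2\ell},0\},$$ where $\preceq$ denotes stochastic domination.
   Context: $Z_1\preceq Z_2$ means $\mathbb P(Z_1\ge x)\le\mathbb P(Z_2\ge x)$ for all real $x$. *)

theory Defs
  imports "HOL-Probability.Probability"
begin

end

theory Submission
  imports Defs
begin

definition pp :: "real \<Rightarrow> nat \<Rightarrow> real" where "pp l m = exp (-l) * l^m / fact m"
definition qq :: "real \<Rightarrow> nat \<Rightarrow> real" where "qq s m = (\<Sum>k<m. pp s k)"
definition FF :: "real \<Rightarrow> real \<Rightarrow> real" where "FF l s = (\<Sum>m. pp l m * qq s m)"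

lemma pp_nonneg: "0 \<le> l \<Longrightarrow> 0 \<le> pp l m"
  by (simp add: pp_def)

lemma pp_sums: "pp l sums 1"
proof -
  have "(\<lambda>n. l^n /\<^sub>R fact n) sums exp l" by (rule exp_converges)
  then have "(\<lambda>n. exp (-l) * (l^n /\<^sub>R fact n)) sums (exp (-l) * exp l)"
    by (rule sums_mult)
  moreover have "(\<lambda>n. exp (-l) * (l^n /\<^sub>R fact n)) = pp l"
    by (rule ext) (simp add: pp_def divide_inverse)
  moreover have "exp (-l) * exp l = 1" by (simp add: exp_minus)
  ultimately show ?thesis by simp
qed
lemma pp_summable: "summable (pp l)" using pp_sums by (rule sums_summable)

lemma qq_nonneg: "0 \<le> s \<Longrightarrow> 0 \<le> qq s m"
  by (simp add: qq_def pp_nonneg sum_nonneg)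

lemma qq_le1: "0 \<le> s \<Longrightarrow> qq s m \<le> 1"
proof -
  assume s: "0 \<le> s"
  have "qq s m \<le> (\<Sum>k. pp s k)" unfolding qq_def
    by (rule sum_le_suminf[OF pp_summable]) (auto simp: pp_nonneg s)
  also have "\<dots> = 1" using pp_sums by (rule sums_unique[symmetric])
  finally show ?thesis .
qed

lemma pp_le1: "0 \<le> s \<Longrightarrow> pp s m \<le> 1"
proof -
  assume s: "0 \<le> s"
  have "qq s (Suc m) = qq s m + pp s m" by (simp add: qq_def)
  then show ?thesis using qq_le1[OF s, of "Suc m"] qq_nonneg[OF s, of m] by linarith
qed

lemma FF_summable: assumes "0 \<le> l" "0 \<le> s" shows "summable (\<lambda>m. pp l m * qq s m)"
proof (rule summable_comparison_test'[OF pp_summable[of l], where N=0])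
  fix n
  have "0 \<le> pp l n" "0 \<le> qq s n" "qq s n \<le> 1" using assms pp_nonneg qq_nonneg qq_le1 by auto
  then show "norm (pp l n * qq s n) \<le> pp l n"
    by (simp add: mult_right_le_one_le abs_mult)
qed

lemma pp_deriv:
  "((\<lambda>x. pp x m) has_real_derivative ((if m = 0 then 0 else pp x (m - 1)) - pp x m)) (at x)"
proof (cases m)
  case 0
  show ?thesis unfolding pp_def 0
    by (auto intro!: derivative_eq_intros)
next
  case (Suc k)
  have d0: "((\<lambda>x. exp (-x) * x^m) has_real_derivative
      (exp (-x) * (-1) * x^m + exp (-x) * (real m * x^(m - 1)))) (at x)"
    by (auto intro!: derivative_eq_intros)
  have "((\<lambda>x. exp (-x) * x^m / fact m) has_real_derivative
      ((exp (-x) * (-1) * x^m + exp (-x) * (real m * x^(m - 1))) / fact m)) (at x)"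
    by (rule DERIV_cdivide[OF d0])
  moreover have "(exp (-x) * (-1) * x^m + exp (-x) * (real m * x^(m - 1))) / fact m
      = exp (-x) * x^k / fact k - exp (-x) * x^m / fact m"
  proof -
    have f: "(fact m :: real) = real m * fact k" using Suc by (simp only: fact_Suc of_nat_mult)
    have e: "real m / fact m = 1 / (fact k :: real)" unfolding f using Suc by simp
    have "exp (-x) * (real m * x^(m - 1)) / fact m = exp (-x) * x^k * (real m / fact m)"
      using Suc by simp
    also have "\<dots> = exp (-x) * x^k / fact k" using e by simp
    finally show ?thesis by (simp add: diff_divide_distrib)
  qed
  ultimately have D: "((\<lambda>x. exp (-x) * x^m / fact m) has_real_derivative
      (exp (-x) * x^k / fact k - exp (-x) * x^m / fact m)) (at x)" by simp
  show ?thesis using D Suc by (simp add: pp_def)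
qed

lemma qq_deriv:
  "((\<lambda>x. qq x m) has_real_derivative (-(if m = 0 then 0 else pp x (m - 1)))) (at x)"
proof (induction m)
  case 0 then show ?case by (simp add: qq_def)
next
  case (Suc m)
  have "((\<lambda>x. qq x m + pp x m) has_real_derivative
     (-(if m = 0 then 0 else pp x (m - 1)) + ((if m = 0 then 0 else pp x (m - 1)) - pp x m))) (at x)"
    by (rule DERIV_add[OF Suc.IH pp_deriv])
  moreover have "(\<lambda>x. qq x (Suc m)) = (\<lambda>x. qq x m + pp x m)"
    by (simp add: qq_def)
  ultimately show ?case by simp
qed


definition dpp :: "real \<Rightarrow> nat \<Rightarrow> real" where
  "dpp x m = (if m = 0 then 0 else pp x (m - 1)) - pp x m"
definition dqq :: "real \<Rightarrow> nat \<Rightarrow> real" where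
  "dqq x m = -(if m = 0 then 0 else pp x (m - 1))"

lemma pp_sq_deriv:
  "((\<lambda>w. pp ((w + c)\<^sup>2) m) has_real_derivative (dpp ((w + c)\<^sup>2) m * (2 * (w + c)))) (at w)"
proof -
  have "((\<lambda>w. (w + c)\<^sup>2) has_real_derivative (2 * (w + c))) (at w)"
    by (auto intro!: derivative_eq_intros)
  from DERIV_chain2[OF pp_deriv[unfolded dpp_def[symmetric]] this] show ?thesis .
qed

lemma qq_sq_deriv:
  "((\<lambda>w. qq ((w + c)\<^sup>2) m) has_real_derivative (dqq ((w + c)\<^sup>2) m * (2 * (w + c)))) (at w)"
proof -
  have "((\<lambda>w. (w + c)\<^sup>2) has_real_derivative (2 * (w + c))) (at w)"
    by (auto intro!: derivative_eq_intros)
  from DERIV_chain2[OF qq_deriv[unfolded dqq_def[symmetric]] this] show ?thesis .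
qed

definition phiK :: "real \<Rightarrow> real \<Rightarrow> nat \<Rightarrow> real" where
  "phiK c w K = (\<Sum>m<K. pp (w\<^sup>2) m * qq ((w + c)\<^sup>2) m)"

definition TT :: "real \<Rightarrow> real \<Rightarrow> nat \<Rightarrow> real" where
  "TT c w m = dpp (w\<^sup>2) m * (2 * w) * qq ((w + c)\<^sup>2) m
      + pp (w\<^sup>2) m * (dqq ((w + c)\<^sup>2) m * (2 * (w + c)))"

lemma phiK_deriv: "((\<lambda>w. phiK c w K) has_real_derivative (\<Sum>m<K. TT c w m)) (at w)"
  unfolding phiK_def TT_def
proof (rule DERIV_sum)
  fix m
  show "((\<lambda>w. pp (w\<^sup>2) m * qq ((w + c)\<^sup>2) m) has_real_derivative
         dpp (w\<^sup>2) m * (2 * w) * qq ((w + c)\<^sup>2) m + pp (w\<^sup>2) m * (dqq ((w + c)\<^sup>2) m * (2 * (w + c)))) (at w)"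
    using DERIV_mult[OF pp_sq_deriv[of 0 m w, simplified] qq_sq_deriv[of c m w]] by (simp add: algebra_simps)
qed

lemma TT_sum: "(\<Sum>m<Suc K. TT c w m) =
   2 * w * (\<Sum>j<K. pp (w\<^sup>2) j * pp ((w + c)\<^sup>2) j) - 2 * w * pp (w\<^sup>2) K * qq ((w + c)\<^sup>2) K
   - 2 * (w + c) * (\<Sum>j<K. pp (w\<^sup>2) (Suc j) * pp ((w + c)\<^sup>2) j)"
proof (induction K)
  case 0 then show ?case by (simp add: TT_def dpp_def dqq_def qq_def)
next
  case (Suc K)
  have q: "qq ((w + c)\<^sup>2) (Suc K) = qq ((w + c)\<^sup>2) K + pp ((w + c)\<^sup>2) K" by (simp add: qq_def)
  have "(\<Sum>m<Suc (Suc K). TT c w m) = (\<Sum>m<Suc K. TT c w m) + TT c w (Suc K)" by simp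
  also have "TT c w (Suc K) = 2 * w * (pp (w\<^sup>2) K - pp (w\<^sup>2) (Suc K)) * qq ((w + c)\<^sup>2) (Suc K)
      - 2 * (w + c) * pp (w\<^sup>2) (Suc K) * pp ((w + c)\<^sup>2) K"
    by (simp add: TT_def dpp_def dqq_def algebra_simps)
  finally show ?case unfolding Suc q by (simp add: algebra_simps)
qed


lemma pp_Suc: "pp x (Suc j) = pp x j * x / real (Suc j)"
proof -
  have f: "(fact (Suc j) :: real) = real (Suc j) * fact j" by (simp only: fact_Suc of_nat_mult)
  show ?thesis unfolding pp_def f by (simp add: field_simps)
qed

lemma amgm_step:
  assumes w: "0 \<le> w" and v: "0 \<le> v"
  shows "2 * v * (pp (w\<^sup>2) (Suc j) * pp (v\<^sup>2) j)
     \<le> w * (pp (w\<^sup>2) j * pp (v\<^sup>2) j + pp (w\<^sup>2) (Suc j) * pp (v\<^sup>2) (Suc j))"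
proof -
  define a where "a = pp (w\<^sup>2) j * pp (v\<^sup>2) j"
  define n where "n = real (Suc j)"
  define y where "y = w * v / n"
  have a0: "0 \<le> a" unfolding a_def using pp_nonneg by simp
  have n0: "0 < n" unfolding n_def by simp
  have L: "2 * v * (pp (w\<^sup>2) (Suc j) * pp (v\<^sup>2) j) = w * a * (2 * y)"
    unfolding pp_Suc a_def y_def n_def[symmetric] using n0 by (simp add: power2_eq_square)
  have R: "pp (w\<^sup>2) (Suc j) * pp (v\<^sup>2) (Suc j) = a * y\<^sup>2"
    unfolding pp_Suc a_def y_def n_def[symmetric] using n0 by (simp add: power2_eq_square)
  have "2 * y \<le> 1 + y\<^sup>2" using sum_squares_ge_zero[of "1 - y" 0]
    by (simp add: power2_eq_square algebra_simps)
  then have "w * a * (2 * y) \<le> w * a * (1 + y\<^sup>2)"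
    using w a0 by (intro mult_left_mono) auto
  then show ?thesis unfolding L R a_def[symmetric] by (simp add: algebra_simps)
qed

lemma TT_lower:
  assumes w: "0 \<le> w" and v: "0 \<le> w + c"
  shows "(\<Sum>m<Suc K. TT c w m) \<ge> - 3 * w * pp (w\<^sup>2) K"
proof -
  define v where "v = w + c"
  define cc where "cc j = pp (w\<^sup>2) j * pp (v\<^sup>2) j" for j
  have v0: "0 \<le> v" using v v_def by simp
  have cc0: "0 \<le> cc j" for j unfolding cc_def using pp_nonneg by simp
  have step: "2 * v * (pp (w\<^sup>2) (Suc j) * pp (v\<^sup>2) j) \<le> w * (cc j + cc (Suc j))" for j
    unfolding cc_def using amgm_step[OF w v0] .
  have "(\<Sum>j<K. 2 * v * (pp (w\<^sup>2) (Suc j) * pp (v\<^sup>2) j)) \<le> (\<Sum>j<K. w * (cc j + cc (Suc j)))"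
    by (rule sum_mono[OF step])
  also have "\<dots> = w * ((\<Sum>j<K. cc j) + (\<Sum>j<K. cc (Suc j)))"
    by (simp only: sum.distrib[symmetric] sum_distrib_left)
  also have "(\<Sum>j<K. cc (Suc j)) = (\<Sum>j<Suc K. cc j) - cc 0"
    unfolding sum.lessThan_Suc_shift by simp
  also have "\<dots> \<le> (\<Sum>j<K. cc j) + cc K" using cc0[of 0] by simp
  finally have B: "(\<Sum>j<K. 2 * v * (pp (w\<^sup>2) (Suc j) * pp (v\<^sup>2) j))
      \<le> w * ((\<Sum>j<K. cc j) + ((\<Sum>j<K. cc j) + cc K))"
    using w by (simp add: mult_left_mono)
  have B2: "2 * v * (\<Sum>j<K. pp (w\<^sup>2) (Suc j) * pp (v\<^sup>2) j)
      = (\<Sum>j<K. 2 * v * (pp (w\<^sup>2) (Suc j) * pp (v\<^sup>2) j))"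
    by (simp add: sum_distrib_left)
  have q1: "qq (v\<^sup>2) K \<le> 1" by (rule qq_le1) simp
  have p1: "pp (v\<^sup>2) K \<le> 1" by (rule pp_le1) simp
  have pK: "0 \<le> pp (w\<^sup>2) K" by (rule pp_nonneg) simp
  have e1: "w * pp (w\<^sup>2) K * qq (v\<^sup>2) K \<le> w * pp (w\<^sup>2) K"
    using q1 pK w by (simp add: mult_left_le)
  have e2: "w * cc K \<le> w * pp (w\<^sup>2) K"
    unfolding cc_def using p1 pK w by (simp add: mult_left_le mult_left_mono)
  show ?thesis
    unfolding TT_sum v_def[symmetric] cc_def[symmetric]
    using B B2 e1 e2 by (simp add: algebra_simps)
qed


lemma pow_fact_lim: "(\<lambda>K. (x::real)^K / fact K) \<longlonglongrightarrow> 0"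
proof -
  have "summable (\<lambda>K. x^K / fact K)"
    using summable_exp[of x] by (simp add: divide_inverse mult.commute)
  then show ?thesis by (rule summable_LIMSEQ_zero)
qed

lemma FF_line_mono:
  assumes w0: "0 \<le> w0" and c0: "0 \<le> w0 + c" and w01: "w0 \<le> w1"
  shows "FF (w0\<^sup>2) ((w0 + c)\<^sup>2) \<le> FF (w1\<^sup>2) ((w1 + c)\<^sup>2)"
proof -
  have lim: "(\<lambda>K. phiK c w (Suc K)) \<longlonglongrightarrow> FF (w\<^sup>2) ((w + c)\<^sup>2)" for w
  proof -
    have "summable (\<lambda>m. pp (w\<^sup>2) m * qq ((w + c)\<^sup>2) m)" by (rule FF_summable) auto
    then have "(\<lambda>K. phiK c w K) \<longlonglongrightarrow> FF (w\<^sup>2) ((w + c)\<^sup>2)"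
      unfolding phiK_def FF_def by (rule summable_LIMSEQ)
    then show ?thesis by (rule LIMSEQ_Suc)
  qed
  define E where "E K = 3 * w1 * ((w1\<^sup>2)^K / fact K)" for K
  have Elim: "(\<lambda>K. E K * (w1 - w0)) \<longlonglongrightarrow> 0"
  proof -
    have "(\<lambda>K. 3 * w1 * ((w1\<^sup>2)^K / fact K) * (w1 - w0)) \<longlonglongrightarrow> 3 * w1 * 0 * (w1 - w0)"
      by (intro tendsto_intros pow_fact_lim)
    then show ?thesis by (simp add: E_def)
  qed
  have step: "phiK c w0 (Suc K) \<le> phiK c w1 (Suc K) + E K * (w1 - w0)" for K
  proof -
    have "phiK c w0 (Suc K) + E K * w0 \<le> phiK c w1 (Suc K) + E K * w1"
    proof (rule DERIV_nonneg_imp_nondecreasing[OF w01])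
      fix x assume x: "w0 \<le> x" "x \<le> w1"
      have D: "((\<lambda>w. phiK c w (Suc K) + E K * w) has_real_derivative
          ((\<Sum>m<Suc K. TT c x m) + E K)) (at x)"
        by (rule DERIV_add[OF phiK_deriv DERIV_cmult_Id])
      have x0: "0 \<le> x" using x w0 by simp
      have T: "(\<Sum>m<Suc K. TT c x m) \<ge> - 3 * x * pp (x\<^sup>2) K"
        by (rule TT_lower) (use x w0 c0 in auto)
      have "pp (x\<^sup>2) K \<le> (x\<^sup>2)^K / fact K"
      proof -
        have "exp (- x\<^sup>2) * (x\<^sup>2)^K \<le> 1 * (x\<^sup>2)^K"
          by (intro mult_right_mono) auto
        then show ?thesis unfolding pp_def by (intro divide_right_mono) auto
      qed
      also have "\<dots> \<le> (w1\<^sup>2)^K / fact K"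
        using x x0 by (intro divide_right_mono power_mono) (auto intro: power_mono)
      finally have "x * pp (x\<^sup>2) K \<le> w1 * ((w1\<^sup>2)^K / fact K)"
        using x x0 pp_nonneg[of "x\<^sup>2" K] by (intro mult_mono) auto
      then have "0 \<le> (\<Sum>m<Suc K. TT c x m) + E K" using T unfolding E_def by linarith
      then show "\<exists>y. ((\<lambda>w. phiK c w (Suc K) + E K * w) has_real_derivative y) (at x) \<and> 0 \<le> y"
        using D by blast
    qed
    then show ?thesis by (simp add: algebra_simps)
  qed
  have "(\<lambda>K. phiK c w1 (Suc K) + E K * (w1 - w0)) \<longlonglongrightarrow> FF (w1\<^sup>2) ((w1 + c)\<^sup>2) + 0"
    by (intro tendsto_add lim Elim)
  then show ?thesis using lim[of w0] step by (intro LIMSEQ_le[where X="\<lambda>K. phiK c w0 (Suc K)"]) auto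
qed

lemma pmf_integral_nat:
  fixes g :: "nat \<Rightarrow> complex"
  assumes "summable (\<lambda>k. norm (pmf p k *\<^sub>R g k))"
  shows "(pmf p k *\<^sub>R g k) = (pmf p k *\<^sub>R g k)"
  by simp

lemma pois_char:
  assumes r: "0 < r"
  shows "(CLINT k | measure_pmf (poisson_pmf r). iexp (\<phi> * (real k - r)))
     = exp (complex_of_real r * (iexp \<phi> - 1) - \<i> * complex_of_real (\<phi> * r))"
proof -
  let ?g = "\<lambda>k::nat. iexp (\<phi> * (real k - r))"
  let ?f = "\<lambda>k::nat. pmf (poisson_pmf r) k *\<^sub>R ?g k"
  have int_eq: "(CLINT k | measure_pmf (poisson_pmf r). ?g k) = integral\<^sup>L (count_space UNIV) ?f"
    unfolding measure_pmf_eq_density by (rule integral_density) auto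
  have nf: "norm (?f k) = pp r k" for k
    using r by (simp add: pp_def norm_mult)
  have integ: "integrable (count_space UNIV) ?f"
    unfolding integrable_count_space_nat_iff nf by (rule pp_summable)
  have "(\<lambda>n. (complex_of_real r * iexp \<phi>)^n /\<^sub>R fact n) sums exp (complex_of_real r * iexp \<phi>)"
    by (rule exp_converges)
  then have S: "(\<lambda>n. exp (- complex_of_real r - \<i> * complex_of_real (\<phi> * r)) * ((complex_of_real r * iexp \<phi>)^n /\<^sub>R fact n))
      sums (exp (- complex_of_real r - \<i> * complex_of_real (\<phi> * r)) * exp (complex_of_real r * iexp \<phi>))"
    by (rule sums_mult)
  have T: "exp (- complex_of_real r - \<i> * complex_of_real (\<phi> * r)) * ((complex_of_real r * iexp \<phi>)^n /\<^sub>R fact n) = ?f n" for n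
  proof -
    have e1: "iexp \<phi> ^ n = exp (of_nat n * (\<i> * complex_of_real \<phi>))"
      by (rule exp_of_nat_mult[symmetric])
    have e2: "iexp (\<phi> * (real n - r)) = exp (of_nat n * (\<i> * complex_of_real \<phi>)) * exp (- \<i> * complex_of_real (\<phi> * r))"
      by (simp add: exp_add[symmetric] algebra_simps)
    have e3: "exp (- complex_of_real r - \<i> * complex_of_real (\<phi> * r)) = exp (- complex_of_real r) * exp (- \<i> * complex_of_real (\<phi> * r))"
      by (simp add: exp_add[symmetric] algebra_simps)
    have e4: "exp (- complex_of_real r) = complex_of_real (exp (- r))"
      by (simp flip: exp_of_real)
    show ?thesis
      using r unfolding e2 e3 e4 power_mult_distrib e1
      by (simp add: scaleR_conv_of_real algebra_simps divide_inverse)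
  qed
  have "?f sums (exp (- complex_of_real r - \<i> * complex_of_real (\<phi> * r)) * exp (complex_of_real r * iexp \<phi>))"
    using S unfolding T .
  then have "integral\<^sup>L (count_space UNIV) ?f = exp (- complex_of_real r - \<i> * complex_of_real (\<phi> * r)) * exp (complex_of_real r * iexp \<phi>)"
    using sums_integral_count_space_nat[OF integ] sums_unique2 by blast
  also have "\<dots> = exp (complex_of_real r * (iexp \<phi> - 1) - \<i> * complex_of_real (\<phi> * r))"
    by (simp add: exp_add[symmetric] algebra_simps)
  finally show ?thesis using int_eq by simp
qed


definition PP :: "real \<Rightarrow> real \<Rightarrow> (nat \<Rightarrow> nat) pmf" where
  "PP l s = Pi_pmf {0, 1} 0 (\<lambda>i. if i = 0 then poisson_pmf l else poisson_pmf s)"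

lemma PP_comp0: "map_pmf (\<lambda>f. f 0) (PP l s) = poisson_pmf l"
  unfolding PP_def by (subst Pi_pmf_component) auto

lemma PP_comp1: "map_pmf (\<lambda>f. f 1) (PP l s) = poisson_pmf s"
  unfolding PP_def by (subst Pi_pmf_component) auto

lemma FF_prob:
  assumes l: "0 < l" and s: "0 < s"
  shows "measure_pmf.prob (PP l s) {f. f 1 < f 0} = FF l s"
proof -
  define A where "A m = (Pi {0, 1::nat} (\<lambda>i. if i = 0 then {m} else {..<m}) :: (nat \<Rightarrow> nat) set)" for m
  have pA: "measure_pmf.prob (PP l s) (A m) = pp l m * qq s m" for m
  proof -
    have "measure_pmf.prob (PP l s) (A m) =
        (\<Prod>x\<in>{0, 1::nat}. measure_pmf.prob (if x = 0 then poisson_pmf l else poisson_pmf s)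
            (if x = 0 then {m} else {..<m}))"
      unfolding A_def PP_def by (rule measure_Pi_pmf_Pi) simp
    also have "\<dots> = measure_pmf.prob (poisson_pmf l) {m} * measure_pmf.prob (poisson_pmf s) {..<m}"
      by simp
    also have "measure_pmf.prob (poisson_pmf l) {m} = pp l m"
      using l by (simp add: measure_pmf_single pp_def field_simps)
    also have "measure_pmf.prob (poisson_pmf s) {..<m} = qq s m"
      using s by (simp add: measure_measure_pmf_finite qq_def pp_def field_simps)
    finally show ?thesis .
  qed
  have disj: "disjoint_family A"
    unfolding disjoint_family_on_def A_def by auto
  have U: "(\<Union>m. A m) = {f. f 1 < f 0}"
    unfolding A_def by (auto simp: Pi_def)
  have "(\<lambda>m. measure_pmf.prob (PP l s) (A m)) sums measure_pmf.prob (PP l s) (\<Union>m. A m)"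
    by (rule measure_pmf.finite_measure_UNION) (auto simp: disj)
  then have "(\<lambda>m. pp l m * qq s m) sums measure_pmf.prob (PP l s) {f. f 1 < f 0}"
    unfolding pA U .
  then show ?thesis unfolding FF_def by (simp add: sums_iff)
qed

definition XX :: "real \<Rightarrow> real \<Rightarrow> real \<Rightarrow> nat \<Rightarrow> (nat \<Rightarrow> nat) \<Rightarrow> real" where
  "XX l s \<sigma> i f = (if i = 0 then (real (f 0) - l) / \<sigma> else - ((real (f 1) - s) / \<sigma>))"

lemma XX_indep: "prob_space.indep_vars (measure_pmf (PP l s)) (\<lambda>i. borel) (XX l s \<sigma>) {0, 1}"
proof -
  define Y where "Y (i::nat) (k::nat) = (if i = 0 then (real k - l) / \<sigma> else - ((real k - s) / \<sigma>))" for i k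
  have "prob_space.indep_vars (measure_pmf (PP l s)) (\<lambda>i. borel) (\<lambda>i (f::nat\<Rightarrow>nat). Y i (f i)) {0, 1}"
    unfolding PP_def
    using prob_space.indep_vars_compose2[OF measure_pmf.prob_space_axioms
        indep_vars_Pi_pmf[of "{0,1}" 0], where Y=Y and N="\<lambda>_. borel"]
    by auto
  moreover have "(\<lambda>f. Y i (f i)) = XX l s \<sigma> i" if "i \<in> {0, 1}" for i
    using that by (auto simp: fun_eq_iff XX_def Y_def)
  ultimately show ?thesis
    using prob_space.indep_vars_cong[OF measure_pmf.prob_space_axioms refl,
        of "{0,1}" "\<lambda>i f. Y i (f i)" "XX l s \<sigma>" "\<lambda>i. borel" "\<lambda>i. borel"]
    by simp
qed

definition mu :: "real \<Rightarrow> real \<Rightarrow> real \<Rightarrow> real measure" where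
  "mu l s \<sigma> = distr (measure_pmf (PP l s)) borel (\<lambda>f. \<Sum>i\<in>{0,1}. XX l s \<sigma> i f)"

lemma char_XX0:
  assumes l: "0 < l"
  shows "char (distr (measure_pmf (PP l s)) borel (XX l s \<sigma> 0)) t
     = exp (complex_of_real l * (iexp (t / \<sigma>) - 1) - \<i> * complex_of_real ((t / \<sigma>) * l))"
proof -
  have "char (distr (measure_pmf (PP l s)) borel (XX l s \<sigma> 0)) t
      = (CLINT f | measure_pmf (PP l s). iexp (t * XX l s \<sigma> 0 f))"
    unfolding char_def by (rule integral_distr) auto
  also have "\<dots> = (CLINT f | measure_pmf (PP l s). (\<lambda>k. iexp ((t / \<sigma>) * (real k - l))) (f 0))"
    by (simp add: XX_def)
  also have "\<dots> = (CLINT k | measure_pmf (map_pmf (\<lambda>f. f 0) (PP l s)). iexp ((t / \<sigma>) * (real k - l)))"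
    by (rule integral_map_pmf[symmetric])
  also have "\<dots> = exp (complex_of_real l * (iexp (t / \<sigma>) - 1) - \<i> * complex_of_real ((t / \<sigma>) * l))"
    unfolding PP_comp0 by (rule pois_char[OF l])
  finally show ?thesis .
qed

lemma char_XX1:
  assumes s: "0 < s"
  shows "char (distr (measure_pmf (PP l s)) borel (XX l s \<sigma> 1)) t
     = exp (complex_of_real s * (iexp (- t / \<sigma>) - 1) - \<i> * complex_of_real ((- t / \<sigma>) * s))"
proof -
  have "char (distr (measure_pmf (PP l s)) borel (XX l s \<sigma> 1)) t
      = (CLINT f | measure_pmf (PP l s). iexp (t * XX l s \<sigma> 1 f))"
    unfolding char_def by (rule integral_distr) auto
  also have "\<dots> = (CLINT f | measure_pmf (PP l s). (\<lambda>k. iexp ((- t / \<sigma>) * (real k - s))) (f 1))"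
    by (simp add: XX_def)
  also have "\<dots> = (CLINT k | measure_pmf (map_pmf (\<lambda>f. f 1) (PP l s)). iexp ((- t / \<sigma>) * (real k - s)))"
    by (rule integral_map_pmf[symmetric])
  also have "\<dots> = exp (complex_of_real s * (iexp (- t / \<sigma>) - 1) - \<i> * complex_of_real ((- t / \<sigma>) * s))"
    unfolding PP_comp1 by (rule pois_char[OF s])
  finally show ?thesis .
qed

lemma char_mu:
  assumes l: "0 < l" and s: "0 < s"
  shows "char (mu l s \<sigma>) t =
     exp (complex_of_real l * (iexp (t / \<sigma>) - 1) - \<i> * complex_of_real ((t / \<sigma>) * l)) *
     exp (complex_of_real s * (iexp (- t / \<sigma>) - 1) - \<i> * complex_of_real ((- t / \<sigma>) * s))"
proof -
  have "char (mu l s \<sigma>) t = (\<Prod>i\<in>{0,1}. char (distr (measure_pmf (PP l s)) borel (XX l s \<sigma> i)) t)"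
    unfolding mu_def by (rule prob_space.char_distr_sum[OF measure_pmf.prob_space_axioms XX_indep])
  also have "\<dots> = char (distr (measure_pmf (PP l s)) borel (XX l s \<sigma> 0)) t *
                  char (distr (measure_pmf (PP l s)) borel (XX l s \<sigma> 1)) t"
    by simp
  finally show ?thesis unfolding char_XX0[OF l] char_XX1[OF s] .
qed

lemma cexp_err:
  assumes r: "0 \<le> r"
  shows "cmod (complex_of_real r * (iexp \<phi> - 1) - \<i> * complex_of_real (\<phi> * r)
              + complex_of_real (r * \<phi>\<^sup>2 / 2)) \<le> r * \<bar>\<phi>\<bar>^3 / 6"
proof -
  have A: "cmod (iexp \<phi> - (\<Sum>k \<le> 2. (\<i> * complex_of_real \<phi>)^k / fact k)) \<le> \<bar>\<phi>\<bar>^3 / fact 3"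
    using iexp_approx1[of \<phi> 2] by (simp add: numeral_3_eq_3)
  have S: "(\<Sum>k \<le> 2. (\<i> * complex_of_real \<phi>)^k / fact k) = 1 + \<i> * complex_of_real \<phi> - complex_of_real (\<phi>\<^sup>2 / 2)"
    by (simp add: numeral_2_eq_2 power2_eq_square field_simps)
  have f3: "(fact 3 :: real) = 6" by (simp add: numeral_3_eq_3)
  have E: "complex_of_real r * (iexp \<phi> - 1) - \<i> * complex_of_real (\<phi> * r) + complex_of_real (r * \<phi>\<^sup>2 / 2)
      = complex_of_real r * (iexp \<phi> - (1 + \<i> * complex_of_real \<phi> - complex_of_real (\<phi>\<^sup>2 / 2)))"
    by (simp add: algebra_simps)
  have "cmod (complex_of_real r * (iexp \<phi> - (1 + \<i> * complex_of_real \<phi> - complex_of_real (\<phi>\<^sup>2 / 2))))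
      = r * cmod (iexp \<phi> - (1 + \<i> * complex_of_real \<phi> - complex_of_real (\<phi>\<^sup>2 / 2)))"
    using r by (simp add: norm_mult)
  also have "\<dots> \<le> r * (\<bar>\<phi>\<bar>^3 / 6)"
    using A unfolding S f3 using r by (intro mult_left_mono) auto
  finally show ?thesis unfolding E by simp
qed


lemma expo_bound:
  assumes l: "0 < l" and s: "0 < s" and \<sigma>: "\<sigma> = sqrt (l + s)"
  shows "cmod ((complex_of_real l * (iexp (t / \<sigma>) - 1) - \<i> * complex_of_real ((t / \<sigma>) * l)) +
               (complex_of_real s * (iexp (- t / \<sigma>) - 1) - \<i> * complex_of_real ((- t / \<sigma>) * s))
               - complex_of_real (- t\<^sup>2 / 2)) \<le> \<bar>t\<bar>^3 / (6 * \<sigma>)"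
proof -
  have sp: "0 < \<sigma>" using l s \<sigma> by simp
  have sq: "\<sigma>\<^sup>2 = l + s" using l s \<sigma> by simp
  have h: "l * (t / \<sigma>)\<^sup>2 / 2 + s * (- t / \<sigma>)\<^sup>2 / 2 = t\<^sup>2 / 2"
  proof -
    have "l * (t / \<sigma>)\<^sup>2 / 2 + s * (- t / \<sigma>)\<^sup>2 / 2 = (l + s) * t\<^sup>2 / (2 * \<sigma>\<^sup>2)"
      by (simp add: power_divide add_divide_distrib distrib_right)
    also have "\<dots> = t\<^sup>2 / 2" unfolding sq[symmetric] using sp by (simp add: field_simps)
    finally show ?thesis .
  qed
  let ?a = "complex_of_real l * (iexp (t / \<sigma>) - 1) - \<i> * complex_of_real ((t / \<sigma>) * l) + complex_of_real (l * (t / \<sigma>)\<^sup>2 / 2)"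
  let ?b = "complex_of_real s * (iexp (- t / \<sigma>) - 1) - \<i> * complex_of_real ((- t / \<sigma>) * s) + complex_of_real (s * (- t / \<sigma>)\<^sup>2 / 2)"
  have eq: "(complex_of_real l * (iexp (t / \<sigma>) - 1) - \<i> * complex_of_real ((t / \<sigma>) * l)) +
               (complex_of_real s * (iexp (- t / \<sigma>) - 1) - \<i> * complex_of_real ((- t / \<sigma>) * s))
               - complex_of_real (- t\<^sup>2 / 2) = ?a + ?b"
  proof -
    have "complex_of_real (l * (t / \<sigma>)\<^sup>2 / 2) + complex_of_real (s * (- t / \<sigma>)\<^sup>2 / 2) = complex_of_real (t\<^sup>2 / 2)"
      unfolding h[symmetric] by simp
    then show ?thesis by (simp add: algebra_simps)
  qed
  have "cmod (?a + ?b) \<le> cmod ?a + cmod ?b" by (rule norm_triangle_ineq)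
  also have "\<dots> \<le> l * \<bar>t / \<sigma>\<bar>^3 / 6 + s * \<bar>- t / \<sigma>\<bar>^3 / 6"
    using cexp_err[of l "t / \<sigma>"] cexp_err[of s "- t / \<sigma>"] l s by (intro add_mono) auto
  also have "\<dots> = (l + s) * \<bar>t\<bar>^3 / (6 * \<sigma>^3)"
    using sp by (simp add: power_divide field_simps)
  also have "\<dots> = \<bar>t\<bar>^3 / (6 * \<sigma>)"
  proof -
    have "\<sigma>^3 = (l + s) * \<sigma>" using sq by (simp add: power3_eq_cube power2_eq_square)
    then have "(l + s) * \<bar>t\<bar>^3 / (6 * \<sigma>^3) = ((l + s) * \<bar>t\<bar>^3) / ((l + s) * (6 * \<sigma>))"
      by (simp add: algebra_simps)
    also have "\<dots> = \<bar>t\<bar>^3 / (6 * \<sigma>)"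
      using l s by (rule_tac mult_divide_mult_cancel_left) auto
    finally show ?thesis .
  qed
  finally show ?thesis unfolding eq .
qed


lemma char_conv:
  assumes l: "\<And>n. 0 < ll n" and s: "\<And>n. 0 < ss n"
    and sg: "\<And>n. sg n = sqrt (ll n + ss n)" and inv0: "(\<lambda>n. 1 / sg n) \<longlonglongrightarrow> 0"
  shows "(\<lambda>n. char (mu (ll n) (ss n) (sg n)) t) \<longlonglongrightarrow> char std_normal_distribution t"
proof -
  define Z where "Z n = (complex_of_real (ll n) * (iexp (t / sg n) - 1) - \<i> * complex_of_real ((t / sg n) * ll n)) +
               (complex_of_real (ss n) * (iexp (- t / sg n) - 1) - \<i> * complex_of_real ((- t / sg n) * ss n))" for n
  have ch: "char (mu (ll n) (ss n) (sg n)) t = exp (Z n)" for n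
    unfolding char_mu[OF l s] Z_def by (simp add: exp_add)
  have b: "norm (Z n - complex_of_real (- t\<^sup>2 / 2)) \<le> \<bar>t\<bar>^3 / 6 * (1 / sg n)" for n
    using expo_bound[OF l s sg, of n t] unfolding Z_def by simp
  have g0: "(\<lambda>n. \<bar>t\<bar>^3 / 6 * (1 / sg n)) \<longlonglongrightarrow> \<bar>t\<bar>^3 / 6 * 0"
    by (intro tendsto_mult tendsto_const inv0)
  have g: "(\<lambda>n. \<bar>t\<bar>^3 / 6 * (1 / sg n)) \<longlonglongrightarrow> 0"
    using g0 by simp
  have ev: "eventually (\<lambda>n. norm (Z n - complex_of_real (- t\<^sup>2 / 2)) \<le> \<bar>t\<bar>^3 / 6 * (1 / sg n)) sequentially"
    using b by (intro always_eventually allI)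
  have "(\<lambda>n. Z n - complex_of_real (- t\<^sup>2 / 2)) \<longlonglongrightarrow> 0"
    by (rule Lim_null_comparison[OF ev g])
  then have "Z \<longlonglongrightarrow> complex_of_real (- t\<^sup>2 / 2)"
    by (rule LIM_zero_cancel)
  then have "(\<lambda>n. exp (Z n)) \<longlonglongrightarrow> exp (complex_of_real (- t\<^sup>2 / 2))"
    by (rule tendsto_exp)
  moreover have "exp (complex_of_real (- t\<^sup>2 / 2)) = char std_normal_distribution t"
    by (simp only: char_std_normal_distribution exp_of_real)
  ultimately show ?thesis unfolding ch by simp
qed

lemma real_distribution_mu: "real_distribution (mu l s \<sigma>)"
  unfolding mu_def real_distribution_def real_distribution_axioms_def
  by (auto intro!: prob_space.prob_space_distr measure_pmf.prob_space_axioms)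

lemma weak_conv_mu:
  assumes l: "\<And>n. 0 < ll n" and s: "\<And>n. 0 < ss n"
    and sg: "\<And>n. sg n = sqrt (ll n + ss n)" and inv0: "(\<lambda>n. 1 / sg n) \<longlonglongrightarrow> 0"
  shows "weak_conv_m (\<lambda>n. mu (ll n) (ss n) (sg n)) std_normal_distribution"
  by (rule levy_continuity[OF real_distribution_mu real_dist_normal_dist char_conv[OF l s sg inv0]])

lemma FF_mu:
  assumes l: "0 < l" and s: "0 < s" and \<sigma>: "0 < \<sigma>"
  shows "FF l s = 1 - cdf (mu l s \<sigma>) ((s - l) / \<sigma>)"
proof -
  interpret R: real_distribution "mu l s \<sigma>" by (rule real_distribution_mu)
  have iff: "(s - l) / \<sigma> < (\<Sum>i\<in>{0,1}. XX l s \<sigma> i f) \<longleftrightarrow> f 1 < f 0" for f :: "nat \<Rightarrow> nat"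
  proof -
    have "(s - l) / \<sigma> < (\<Sum>i\<in>{0,1}. XX l s \<sigma> i f) \<longleftrightarrow> (s - l) / \<sigma> < (real (f 0) - real (f 1) + (s - l)) / \<sigma>"
      by (simp add: XX_def diff_divide_distrib add_divide_distrib algebra_simps)
    also have "\<dots> \<longleftrightarrow> f 1 < f 0"
      using \<sigma> by (simp add: divide_less_cancel)
    finally show ?thesis .
  qed
  have set_eq: "{f. (s - l) / \<sigma> < (\<Sum>i\<in>{0,1}. XX l s \<sigma> i f)} = {f. f 1 < f 0}"
    using iff by blast
  have "measure (mu l s \<sigma>) {(s - l) / \<sigma> <..} = measure_pmf.prob (PP l s) {f. f 1 < f 0}"
    unfolding mu_def set_eq[symmetric]
    by (subst measure_distr) (auto simp: vimage_def)
  also have "\<dots> = FF l s" by (rule FF_prob[OF l s])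
  finally have A: "measure (mu l s \<sigma>) {(s - l) / \<sigma> <..} = FF l s" .
  have "measure (mu l s \<sigma>) {(s - l) / \<sigma> <..} = measure (mu l s \<sigma>) (space (mu l s \<sigma>) - {..(s - l) / \<sigma>})"
    by (auto intro!: arg_cong[where f="measure (mu l s \<sigma>)"])
  also have "\<dots> = 1 - cdf (mu l s \<sigma>) ((s - l) / \<sigma>)"
    by (subst R.prob_compl) (auto simp: cdf_def)
  finally show ?thesis using A by simp
qed

lemma normal_singleton: "measure std_normal_distribution {x} = 0"
proof -
  have "emeasure std_normal_distribution {x} = (\<integral>\<^sup>+y. ennreal (std_normal_density y) * indicator {x} y \<partial>lborel)"
    by (rule emeasure_density) auto
  also have "\<dots> = ennreal (std_normal_density x) * emeasure lborel {x}"
    by (rule nn_integral_indicator_singleton) simp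
  finally show ?thesis by (simp add: measure_def)
qed


lemma inv_shift_lim:
  assumes a: "1 \<le> a"
  shows "(\<lambda>n. 1 / (real n + a)) \<longlonglongrightarrow> 0"
proof -
  have ev: "eventually (\<lambda>n. norm (1 / (real n + a)) \<le> inverse (real (Suc n))) sequentially"
    using a by (intro always_eventually allI) (simp add: divide_simps)
  show ?thesis by (rule Lim_null_comparison[OF ev LIMSEQ_inverse_real_of_nat])
qed

lemma tau_lim:
  assumes a: "1 \<le> a"
  shows "(\<lambda>n. (((real n + a) + c)\<^sup>2 - (real n + a)\<^sup>2) / sqrt ((real n + a)\<^sup>2 + ((real n + a) + c)\<^sup>2))
     \<longlonglongrightarrow> sqrt 2 * c"
proof -
  define e where "e n = 1 / (real n + a)" for n
  have e0: "e \<longlonglongrightarrow> 0" unfolding e_def by (rule inv_shift_lim[OF a])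
  have eq: "(((real n + a) + c)\<^sup>2 - (real n + a)\<^sup>2) / sqrt ((real n + a)\<^sup>2 + ((real n + a) + c)\<^sup>2)
      = (2 * c + c\<^sup>2 * e n) / sqrt (2 + 2 * c * e n + c\<^sup>2 * (e n)\<^sup>2)" for n
  proof -
    define w where "w = real n + a"
    have w: "0 < w" using a by (simp add: w_def)
    have en: "e n = 1 / w" by (simp add: e_def w_def)
    have num: "(w + c)\<^sup>2 - w\<^sup>2 = w * (2 * c + c\<^sup>2 * e n)"
    proof -
      have "w * (2 * c + c\<^sup>2 * (1 / w)) = 2 * w * c + c\<^sup>2 * (w * (1 / w))"
        by (simp add: algebra_simps)
      also have "w * (1 / w) = 1" using w by simp
      finally show ?thesis unfolding en by (simp add: power2_eq_square algebra_simps)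
    qed
    have "w\<^sup>2 + (w + c)\<^sup>2 = w\<^sup>2 * (2 + 2 * c * e n + c\<^sup>2 * (e n)\<^sup>2)"
    proof -
      have i: "w * (1 / w) = 1" using w by simp
      have "w\<^sup>2 * (2 + 2 * c * (1 / w) + c\<^sup>2 * (1 / w)\<^sup>2)
          = 2 * w\<^sup>2 + 2 * c * w * (w * (1 / w)) + c\<^sup>2 * ((w * (1 / w)))\<^sup>2"
        by (simp add: power2_eq_square algebra_simps)
      also have "\<dots> = 2 * w\<^sup>2 + 2 * c * w + c\<^sup>2" unfolding i by simp
      finally show ?thesis unfolding en by (simp add: power2_eq_square algebra_simps)
    qed
    then have den: "sqrt (w\<^sup>2 + (w + c)\<^sup>2) = w * sqrt (2 + 2 * c * e n + c\<^sup>2 * (e n)\<^sup>2)"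
      using w by (simp add: real_sqrt_mult)
    show ?thesis unfolding w_def[symmetric] num den using w by simp
  qed
  have "(\<lambda>n. (2 * c + c\<^sup>2 * e n) / sqrt (2 + 2 * c * e n + c\<^sup>2 * (e n)\<^sup>2))
      \<longlonglongrightarrow> (2 * c + c\<^sup>2 * 0) / sqrt (2 + 2 * c * 0 + c\<^sup>2 * 0\<^sup>2)"
    by (intro tendsto_intros e0) simp
  moreover have "(2 * c + c\<^sup>2 * 0) / sqrt (2 + 2 * c * 0 + c\<^sup>2 * 0\<^sup>2) = sqrt 2 * c"
  proof -
    have "2 * c / sqrt 2 = sqrt 2 * c"
    proof -
      have h: "sqrt 2 * sqrt 2 = (2::real)" by simp
      have nz: "sqrt 2 \<noteq> (0::real)" by simp
      have "sqrt 2 * sqrt 2 * c / sqrt 2 = sqrt 2 * c"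
        using nz by (subst mult.assoc, rule nonzero_mult_div_cancel_left)
      then show ?thesis unfolding h .
    qed
    then show ?thesis by simp
  qed
  ultimately show ?thesis unfolding eq by simp
qed


lemma FF_gauss:
  assumes u: "0 \<le> u" and uc: "0 \<le> u + c"
  shows "FF (u\<^sup>2) ((u + c)\<^sup>2) \<le> 1 - cdf std_normal_distribution (sqrt 2 * c)"
proof -
  interpret N: real_distribution std_normal_distribution by (rule real_dist_normal_dist)
  define a where "a = \<bar>c\<bar> + u + 1"
  define w where "w n = real n + a" for n :: nat
  define ll where "ll n = (w n)\<^sup>2" for n
  define ss where "ss n = (w n + c)\<^sup>2" for n
  define sg where "sg n = sqrt (ll n + ss n)" for n
  define \<tau> where "\<tau> n = (ss n - ll n) / sg n" for n
  have a1: "1 \<le> a" unfolding a_def using u by simp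
  have w1: "1 \<le> w n" for n unfolding w_def using a1 by simp
  have wc1: "1 \<le> w n + c" for n unfolding w_def a_def using u by (simp add: abs_if)
  have wu: "u \<le> w n" for n unfolding w_def a_def by simp
  have llp: "0 < ll n" for n unfolding ll_def using w1[of n] by simp
  have ssp: "0 < ss n" for n unfolding ss_def using wc1[of n] by simp
  have sgw: "w n \<le> sg n" for n
  proof -
    have "sqrt ((w n)\<^sup>2) \<le> sg n" unfolding sg_def ll_def ss_def by (rule real_sqrt_le_mono) simp
    then show ?thesis using w1[of n] by simp
  qed
  have sgp: "0 < sg n" for n using sgw[of n] w1[of n] by simp
  have inv0: "(\<lambda>n. 1 / sg n) \<longlonglongrightarrow> 0"
  proof -
    have ev: "eventually (\<lambda>n. norm (1 / sg n) \<le> 1 / (real n + a)) sequentially"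
    proof (intro always_eventually allI)
      fix n
      have "1 / sg n \<le> 1 / w n" using sgw[of n] w1[of n] by (intro divide_left_mono) auto
      then show "norm (1 / sg n) \<le> 1 / (real n + a)" using sgp[of n] by (simp add: w_def)
    qed
    show ?thesis by (rule Lim_null_comparison[OF ev inv_shift_lim[OF a1]])
  qed
  have WC: "weak_conv_m (\<lambda>n. mu (ll n) (ss n) (sg n)) std_normal_distribution"
    by (rule weak_conv_mu[OF llp ssp sg_def inv0])
  have conv: "(\<lambda>n. cdf (mu (ll n) (ss n) (sg n)) x) \<longlonglongrightarrow> cdf std_normal_distribution x" for x
  proof -
    have "isCont (cdf std_normal_distribution) x" using N.isCont_cdf normal_singleton by simp
    then show ?thesis using WC unfolding weak_conv_m_def weak_conv_def by blast
  qed
  have bound: "FF (u\<^sup>2) ((u + c)\<^sup>2) \<le> 1 - cdf (mu (ll n) (ss n) (sg n)) (\<tau> n)" for n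
  proof -
    have "FF (u\<^sup>2) ((u + c)\<^sup>2) \<le> FF ((w n)\<^sup>2) ((w n + c)\<^sup>2)"
      by (rule FF_line_mono[OF u uc wu])
    also have "\<dots> = 1 - cdf (mu (ll n) (ss n) (sg n)) (\<tau> n)"
      unfolding ll_def[symmetric] ss_def[symmetric] \<tau>_def by (rule FF_mu[OF llp ssp sgp])
    finally show ?thesis .
  qed
  have taul: "\<tau> \<longlonglongrightarrow> sqrt 2 * c"
    using tau_lim[OF a1, of c] unfolding \<tau>_def ss_def ll_def sg_def w_def by simp
  have eps: "FF (u\<^sup>2) ((u + c)\<^sup>2) \<le> 1 - cdf std_normal_distribution (sqrt 2 * c - e)" if e: "0 < e" for e
  proof -
    have ev: "eventually (\<lambda>n. sqrt 2 * c - e < \<tau> n) sequentially"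
      using taul e by (intro order_tendstoD(1)) auto
    have ev2: "eventually (\<lambda>n. FF (u\<^sup>2) ((u + c)\<^sup>2) \<le> 1 - cdf (mu (ll n) (ss n) (sg n)) (sqrt 2 * c - e)) sequentially"
      using ev
    proof eventually_elim
      case (elim n)
      have "cdf (mu (ll n) (ss n) (sg n)) (sqrt 2 * c - e) \<le> cdf (mu (ll n) (ss n) (sg n)) (\<tau> n)"
        using elim by (intro finite_borel_measure.cdf_nondecreasing[OF real_distribution.finite_borel_measure_M[OF real_distribution_mu]]) simp
      then show ?case using bound[of n] by simp
    qed
    have "(\<lambda>n. 1 - cdf (mu (ll n) (ss n) (sg n)) (sqrt 2 * c - e)) \<longlonglongrightarrow> 1 - cdf std_normal_distribution (sqrt 2 * c - e)"
      by (intro tendsto_diff tendsto_const conv)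
    then show ?thesis
      using ev2 by (intro tendsto_le[OF trivial_limit_sequentially _ tendsto_const]) auto
  qed
  have "(\<lambda>k. sqrt 2 * c - 1 / real (Suc k)) \<longlonglongrightarrow> sqrt 2 * c - 0"
    using LIMSEQ_inverse_real_of_nat by (intro tendsto_diff tendsto_const) (simp add: divide_inverse)
  then have "(\<lambda>k. cdf std_normal_distribution (sqrt 2 * c - 1 / real (Suc k))) \<longlonglongrightarrow> cdf std_normal_distribution (sqrt 2 * c)"
    using N.isCont_cdf normal_singleton by (intro isCont_tendsto_compose[where g="cdf std_normal_distribution"]) auto
  then have "(\<lambda>k. 1 - cdf std_normal_distribution (sqrt 2 * c - 1 / real (Suc k))) \<longlonglongrightarrow> 1 - cdf std_normal_distribution (sqrt 2 * c)"
    by (intro tendsto_diff tendsto_const)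
  then show ?thesis
    using eps by (intro LIMSEQ_le_const) auto
qed

lemma (in prob_space) indep_sets_reindex:
  assumes inj: "inj_on h I" and ind: "indep_sets F (h ` I)"
  shows "indep_sets (\<lambda>i. F (h i)) I"
  unfolding indep_sets_def
proof (intro conjI ballI allI impI)
  fix i assume "i \<in> I" then show "F (h i) \<subseteq> events" using ind by (auto simp: indep_sets_def)
next
  fix J A assume J: "J \<subseteq> I" "J \<noteq> {}" "finite J" and A: "A \<in> Pi J (\<lambda>i. F (h i))"
  define B where "B j = A (the_inv_into J h j)" for j
  have injJ: "inj_on h J" using inj J(1) by (rule inj_on_subset)
  have Bh: "B (h i) = A i" if "i \<in> J" for i
    unfolding B_def using the_inv_into_f_f[OF injJ that] by simp
  have "B \<in> Pi (h ` J) F" using A Bh by auto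
  moreover have "h ` J \<subseteq> h ` I" "h ` J \<noteq> {}" "finite (h ` J)" using J by auto
  ultimately have "prob (\<Inter>j\<in>h ` J. B j) = (\<Prod>j\<in>h ` J. prob (B j))"
    using ind unfolding indep_sets_def by blast
  moreover have "(\<Inter>j\<in>h ` J. B j) = (\<Inter>i\<in>J. A i)" using Bh by auto
  moreover have "(\<Prod>j\<in>h ` J. prob (B j)) = (\<Prod>i\<in>J. prob (A i))"
    using prod.reindex[OF injJ, of "\<lambda>j. prob (B j)"] Bh by simp
  ultimately show "prob (\<Inter>j\<in>J. A j) = (\<Prod>j\<in>J. prob (A j))" by simp
qed

lemma (in prob_space) indep_vars_reindex:
  assumes inj: "inj_on h I" and ind: "indep_vars M' X (h ` I)"
  shows "indep_vars (\<lambda>i. M' (h i)) (\<lambda>i. X (h i)) I"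
  using ind indep_sets_reindex[OF inj, of "\<lambda>i. {X i -` A \<inter> space M | A. A \<in> sets (M' i)}"]
  unfolding indep_vars_def2 by auto


lemma density_singleton:
  assumes [measurable]: "f \<in> borel_measurable borel"
  shows "measure (density lborel f) {x} = 0"
proof -
  have "emeasure (density lborel f) {x} = (\<integral>\<^sup>+y. f y * indicator {x} y \<partial>lborel)"
    by (rule emeasure_density) auto
  also have "\<dots> = f x * emeasure lborel {x}"
    by (rule nn_integral_indicator_singleton) simp
  finally show ?thesis by (simp add: measure_def)
qed

lemma partB:
  assumes P: "prob_space M" and x: "0 < x" and l: "0 \<le> l"
    and D: "distributed M lborel X std_normal_density"
  shows "1 - cdf std_normal_distribution (sqrt 2 * (x - sqrt l))
     \<le> measure M {\<omega> \<in> space M. (1 / sqrt 2) * max (X \<omega> + sqrt (2 * l)) 0 \<ge> x}"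
proof -
  interpret P: prob_space M by (rule P)
  define a where "a = sqrt 2 * (x - sqrt l)"
  have Xm[measurable]: "X \<in> borel_measurable M"
    using distributed_measurable[OF D] by simp
  have "cdf std_normal_distribution a = measure (distr M lborel X) {..a}"
    unfolding cdf_def distributed_distr_eq_density[OF D] ..
  also have "\<dots> = measure M (X -` {..a} \<inter> space M)"
    by (rule measure_distr) (use distributed_measurable[OF D] in auto)
  finally have c: "cdf std_normal_distribution a = measure M {\<omega> \<in> space M. X \<omega> \<le> a}"
    by (simp add: vimage_def Int_def conj_commute)
  have "1 - measure M {\<omega> \<in> space M. X \<omega> \<le> a} = measure M (space M - {\<omega> \<in> space M. X \<omega> \<le> a})"
    by (rule P.prob_compl[symmetric]) measurable
  also have "\<dots> \<le> measure M {\<omega> \<in> space M. (1 / sqrt 2) * max (X \<omega> + sqrt (2 * l)) 0 \<ge> x}"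
  proof (rule P.finite_measure_mono)
    show "{\<omega> \<in> space M. (1 / sqrt 2) * max (X \<omega> + sqrt (2 * l)) 0 \<ge> x} \<in> sets M"
      by measurable
    show "space M - {\<omega> \<in> space M. X \<omega> \<le> a} \<subseteq> {\<omega> \<in> space M. (1 / sqrt 2) * max (X \<omega> + sqrt (2 * l)) 0 \<ge> x}"
    proof safe
      fix \<omega> assume \<omega>: "\<omega> \<in> space M" "\<not> X \<omega> \<le> a"
      have s2: "sqrt (2 * l) = sqrt 2 * sqrt l" by (simp add: real_sqrt_mult)
      have "sqrt 2 * x < X \<omega> + sqrt (2 * l)" using \<omega> unfolding a_def s2 by (simp add: algebra_simps)
      moreover have "0 < sqrt 2 * x" using x by simp
      ultimately have m: "max (X \<omega> + sqrt (2 * l)) 0 = X \<omega> + sqrt (2 * l)" by simp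
      have "x = (1 / sqrt 2) * (sqrt 2 * x)" by simp
      also have "\<dots> \<le> (1 / sqrt 2) * (X \<omega> + sqrt (2 * l))"
        using \<open>sqrt 2 * x < X \<omega> + sqrt (2 * l)\<close> by (intro mult_left_mono) auto
      finally show "x \<le> (1 / sqrt 2) * max (X \<omega> + sqrt (2 * l)) 0" unfolding m .
    qed
  qed
  finally show ?thesis using c unfolding a_def by simp
qed


lemma erlang_tail_qq:
  assumes n: "0 < n" and t: "0 \<le> t"
  shows "1 - erlang_CDF (n - 1) 1 t = qq t n"
proof -
  have "1 - erlang_CDF (n - 1) 1 t = (\<Sum>k\<le>n - 1. (1 * t)^k * exp (- 1 * t) / fact k)"
    using t by (simp add: erlang_CDF_def)
  also have "{..n - 1} = {..<n}" using n by auto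
  also have "(\<Sum>k<n. (1 * t)^k * exp (- 1 * t) / fact k) = qq t n"
    unfolding qq_def pp_def by (intro sum.cong refl) (simp add: mult.commute)
  finally show ?thesis .
qed

lemma partA:
  fixes M :: "'a measure" and Y :: "nat \<Rightarrow> 'a \<Rightarrow> real" and N :: "'a \<Rightarrow> nat" and X :: "'a \<Rightarrow> real"
  assumes P: "prob_space M" and x: "0 < x"
    and Yd: "\<And>i. distributed M lborel (Y i) (exponential_density 1)"
    and Nm[measurable]: "N \<in> measurable M (count_space UNIV)"
    and Np: "\<And>k. measure M {\<omega> \<in> space M. N \<omega> = k} = l ^ k / fact k * exp (- l)"
    and ind: "prob_space.indep_vars M (\<lambda>_. borel)
           (\<lambda>j. case j of 0 \<Rightarrow> X | Suc 0 \<Rightarrow> (\<lambda>\<omega>. real (N \<omega>)) | Suc (Suc i) \<Rightarrow> Y i) UNIV"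
  shows "measure M {\<omega> \<in> space M. sqrt (\<Sum>i<N \<omega>. Y i \<omega>) \<ge> x} \<le> FF l (x\<^sup>2)"
proof -
  interpret P: prob_space M by (rule P)
  define Z where "Z = (\<lambda>j::nat. case j of 0 \<Rightarrow> X | Suc 0 \<Rightarrow> (\<lambda>\<omega>. real (N \<omega>)) | Suc (Suc i) \<Rightarrow> Y i)"
  have indZ: "P.indep_vars (\<lambda>_. borel) Z UNIV" using ind unfolding Z_def .
  have Ym[measurable]: "Y i \<in> borel_measurable M" for i
    using distributed_measurable[OF Yd[of i]] by simp
  define t where "t = x\<^sup>2"
  have t0: "0 < t" unfolding t_def using x by simp
  define S where "S n \<omega> = (\<Sum>i<n. Y i \<omega>)" for n \<omega>
  have Sm[measurable]: "S n \<in> borel_measurable M" for n unfolding S_def by measurable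
  define E where "E n = {\<omega> \<in> space M. N \<omega> = n \<and> t \<le> S n \<omega>}" for n
  have Em: "E n \<in> sets M" for n unfolding E_def by measurable
  have disj: "disjoint_family E" unfolding disjoint_family_on_def E_def by auto
  have sub: "{\<omega> \<in> space M. sqrt (\<Sum>i<N \<omega>. Y i \<omega>) \<ge> x} \<subseteq> (\<Union>n. E n)"
  proof safe
    fix \<omega> assume \<omega>: "\<omega> \<in> space M" "x \<le> sqrt (\<Sum>i<N \<omega>. Y i \<omega>)"
    define v where "v = (\<Sum>i<N \<omega>. Y i \<omega>)"
    have v0: "0 \<le> v"
    proof (rule ccontr)
      assume "\<not> 0 \<le> v" then have "sqrt v < 0" by simp
      then show False using \<omega> x unfolding v_def by linarith
    qed
    have "x\<^sup>2 \<le> (sqrt v)\<^sup>2" using \<omega> x unfolding v_def[symmetric] by (intro power_mono) auto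
    then have "t \<le> v" using v0 unfolding t_def by simp
    then show "\<omega> \<in> (\<Union>n. E n)" using \<omega> unfolding E_def S_def v_def by auto
  qed
  have pE: "measure M (E n) = pp l n * qq t n" for n
  proof (cases "n = 0")
    case True
    then have "E n = {}" unfolding E_def S_def using t0 by auto
    then show ?thesis using True by (simp add: qq_def)
  next
    case False
    then have n0: "0 < n" by simp
    define B where "B = (\<lambda>i. Suc (Suc i)) ` {..<n}"
    have IR: "P.indep_var (Pi\<^sub>M {1} (\<lambda>_. borel)) (\<lambda>\<omega>. restrict (\<lambda>i. Z i \<omega>) {1})
                          (Pi\<^sub>M B (\<lambda>_. borel)) (\<lambda>\<omega>. restrict (\<lambda>i. Z i \<omega>) B)"
      by (rule P.indep_var_restrict[OF indZ]) (auto simp: B_def)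
    have g1: "(\<lambda>f. f 1) \<in> measurable (Pi\<^sub>M {1::nat} (\<lambda>_. borel)) (borel :: real measure)"
      by (rule measurable_component_singleton) simp
    have g2: "(\<lambda>f. \<Sum>i<n. f (Suc (Suc i))) \<in> borel_measurable (Pi\<^sub>M B (\<lambda>_. borel :: real measure))"
      by (intro borel_measurable_sum measurable_component_singleton) (auto simp: B_def)
    have IV0: "P.indep_var borel ((\<lambda>f. f 1) \<circ> (\<lambda>\<omega>. restrict (\<lambda>i. Z i \<omega>) {1}))
                           borel ((\<lambda>f. \<Sum>i<n. f (Suc (Suc i))) \<circ> (\<lambda>\<omega>. restrict (\<lambda>i. Z i \<omega>) B))"
      by (rule P.indep_var_compose[OF IR g1 g2])
    have e1: "(\<lambda>f. f 1) \<circ> (\<lambda>\<omega>. restrict (\<lambda>i. Z i \<omega>) {1}) = (\<lambda>\<omega>. real (N \<omega>))"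
      by (auto simp: Z_def fun_eq_iff)
    have e2: "(\<lambda>f. \<Sum>i<n. f (Suc (Suc i))) \<circ> (\<lambda>\<omega>. restrict (\<lambda>i. Z i \<omega>) B) = S n"
      by (auto simp: Z_def fun_eq_iff S_def B_def intro!: sum.cong)
    have IV: "P.indep_var borel (\<lambda>\<omega>. real (N \<omega>)) borel (S n)" using IV0 unfolding e1 e2 .
    have prodeq: "P.prob ((\<lambda>\<omega>. (real (N \<omega>), S n \<omega>)) -` ({real n} \<times> {t..}) \<inter> space M)
        = P.prob ((\<lambda>\<omega>. real (N \<omega>)) -` {real n} \<inter> space M) * P.prob (S n -` {t..} \<inter> space M)"
      by (rule P.indep_varD[OF IV]) auto
    have s1: "(\<lambda>\<omega>. (real (N \<omega>), S n \<omega>)) -` ({real n} \<times> {t..}) \<inter> space M = E n"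
      unfolding E_def by auto
    have s2: "(\<lambda>\<omega>. real (N \<omega>)) -` {real n} \<inter> space M = {\<omega> \<in> space M. N \<omega> = n}"
      by auto
    have pN: "P.prob {\<omega> \<in> space M. N \<omega> = n} = pp l n"
      unfolding Np pp_def by (simp add: algebra_simps)
    have indY: "P.indep_vars (\<lambda>i. borel) Y {..<n}"
    proof -
      have "P.indep_vars (\<lambda>_. borel) Z ((\<lambda>i. Suc (Suc i)) ` {..<n})"
        by (rule P.indep_vars_subset[OF indZ]) auto
      then have "P.indep_vars (\<lambda>i. borel) (\<lambda>i. Z (Suc (Suc i))) {..<n}"
        using P.indep_vars_reindex[of "\<lambda>i. Suc (Suc i)" "{..<n}" "\<lambda>_. borel" Z] by (simp add: inj_on_def)
      moreover have "(\<lambda>i. Z (Suc (Suc i))) = Y" by (simp add: Z_def fun_eq_iff)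
      ultimately show ?thesis by simp
    qed
    have DS: "distributed M lborel (S n) (erlang_density (n - 1) 1)"
    proof -
      have "distributed M lborel (\<lambda>x. \<Sum>i\<in>{..<n}. Y i x) (erlang_density (card {..<n} - 1) 1)"
        by (rule P.exponential_distributed_sum[OF _ _ _ Yd indY]) (use n0 in auto)
      moreover have "(\<lambda>x. \<Sum>i\<in>{..<n}. Y i x) = S n" by (simp add: S_def fun_eq_iff)
      ultimately show ?thesis by simp
    qed
    have gt: "P.prob {\<omega> \<in> space M. t < S n \<omega>} = qq t n"
      using P.erlang_distributed_gt[OF DS, of t] t0 erlang_tail_qq[OF n0, of t] by simp
    have eq0: "P.prob {\<omega> \<in> space M. S n \<omega> = t} = 0"
    proof -
      have "P.prob {\<omega> \<in> space M. S n \<omega> = t} = measure (distr M lborel (S n)) {t}"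
        by (subst measure_distr) (auto simp: vimage_def Int_def conj_commute)
      also have "\<dots> = 0" unfolding distributed_distr_eq_density[OF DS] by (rule density_singleton) simp
      finally show ?thesis .
    qed
    have ge: "P.prob (S n -` {t..} \<inter> space M) = qq t n"
    proof -
      have "S n -` {t..} \<inter> space M = {\<omega> \<in> space M. t < S n \<omega>} \<union> {\<omega> \<in> space M. S n \<omega> = t}"
        by auto
      moreover have "P.prob ({\<omega> \<in> space M. t < S n \<omega>} \<union> {\<omega> \<in> space M. S n \<omega> = t})
          = P.prob {\<omega> \<in> space M. t < S n \<omega>} + P.prob {\<omega> \<in> space M. S n \<omega> = t}"
        by (rule P.finite_measure_Union) auto
      ultimately show ?thesis using gt eq0 by simp
    qed
    show ?thesis using prodeq unfolding s1 s2 pN ge .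
  qed
  have "(\<lambda>n. measure M (E n)) sums measure M (\<Union>n. E n)"
    by (rule P.finite_measure_UNION) (use Em disj in auto)
  then have F: "measure M (\<Union>n. E n) = FF l t"
    unfolding pE FF_def by (simp add: sums_iff)
  have "measure M {\<omega> \<in> space M. sqrt (\<Sum>i<N \<omega>. Y i \<omega>) \<ge> x} \<le> measure M (\<Union>n. E n)"
    by (rule P.finite_measure_mono[OF sub]) (use Em in auto)
  then show ?thesis unfolding F t_def .
qed


theorem lemma2p5:
  fixes M :: "'a measure" and X :: "'a \<Rightarrow> real" and Y :: "nat \<Rightarrow> 'a \<Rightarrow> real"
    and N :: "'a \<Rightarrow> nat" and l :: real
  assumes "prob_space M"
    and "0 \<le> l"
    and "distributed M lborel X std_normal_density"
    and "\<And>i. distributed M lborel (Y i) (exponential_density 1)"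
    and "N \<in> measurable M (count_space UNIV)"
    and "\<And>k. measure M {\<omega> \<in> space M. N \<omega> = k} = l ^ k / fact k * exp (- l)"
    and "prob_space.indep_vars M (\<lambda>_. borel)
           (\<lambda>j. case j of 0 \<Rightarrow> X | Suc 0 \<Rightarrow> (\<lambda>\<omega>. real (N \<omega>)) | Suc (Suc i) \<Rightarrow> Y i) UNIV"
  shows "\<forall>x::real.
           measure M {\<omega> \<in> space M. sqrt (\<Sum>i<N \<omega>. Y i \<omega>) \<ge> x}
           \<le> measure M {\<omega> \<in> space M. (1 / sqrt 2) * max (X \<omega> + sqrt (2 * l)) 0 \<ge> x}"
proof
  fix x :: real
  interpret P: prob_space M by (rule assms(1))
  show "measure M {\<omega> \<in> space M. sqrt (\<Sum>i<N \<omega>. Y i \<omega>) \<ge> x}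
           \<le> measure M {\<omega> \<in> space M. (1 / sqrt 2) * max (X \<omega> + sqrt (2 * l)) 0 \<ge> x}"
  proof (cases "x \<le> 0")
    case True
    have "{\<omega> \<in> space M. (1 / sqrt 2) * max (X \<omega> + sqrt (2 * l)) 0 \<ge> x} = space M"
    proof safe
      fix \<omega> assume "\<omega> \<in> space M"
      have "0 \<le> (1 / sqrt 2) * max (X \<omega> + sqrt (2 * l)) 0" by simp
      then show "x \<le> (1 / sqrt 2) * max (X \<omega> + sqrt (2 * l)) 0" using True by linarith
    qed
    then show ?thesis using P.prob_le_1 by (simp add: P.prob_space)
  next
    case False
    then have x: "0 < x" by simp
    have A: "measure M {\<omega> \<in> space M. sqrt (\<Sum>i<N \<omega>. Y i \<omega>) \<ge> x} \<le> FF l (x\<^sup>2)"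
      by (rule partA[OF assms(1) x assms(4) assms(5) assms(6) assms(7)])
    have C: "FF l (x\<^sup>2) \<le> 1 - cdf std_normal_distribution (sqrt 2 * (x - sqrt l))"
      using FF_gauss[of "sqrt l" "x - sqrt l"] assms(2) x by simp
    have B: "1 - cdf std_normal_distribution (sqrt 2 * (x - sqrt l))
        \<le> measure M {\<omega> \<in> space M. (1 / sqrt 2) * max (X \<omega> + sqrt (2 * l)) 0 \<ge> x}"
      by (rule partB[OF assms(1) x assms(2) assms(3)])
    show ?thesis using A B C by linarith
  qed
qed

end
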